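(* Let $\Gamma:\Delta\to\mathbb{R}_+$ be a completely monotone double kernel (see context) whose measure $\mu$ satisfies $0<\mu(\mathbb{R})<+\infty$, extended to the diagonal by $\Gamma(t,t)=\mu(\mathbb{R})$. Then $\Gamma$ preserves nonnegativity.
   Context: $\Delta=\{(t,s)\in\mathbb{R}_+^2:s\le t\}$, $\mathring\Delta=\{(t,s):0<s<t\}$. A function $\Gamma:\mathring\Delta\to\mathbb{R}_+$ is a completely monotone double kernel if there exist a Borel measure $\mu$ on $\mathbb{R}$ finite on compact sets and a family $(\rho(\alpha,\cdot))_{\alpha\in\mathbb{R}}$ of Borel measures on $\mathbb{R}_+$, finite on compact sets, such that $\rho(\beta,\cdot)-\rho(\alpha,\cdot)$ is a nonnegative measure whenever $\alpha\le\beta$, with either $\Gamma(t,s)=\int_{\mathbb{R}}e^{-\rho(\alpha,(s,t])}\mu(\mathrm{d}\alpha)$ for all $(t,s)\in\mathring\Delta$, or $\Gamma(t,s)=\int_{\mathbb{R}}e^{-\rho(\alpha,[s,t))}\mu(\mathrm{d}\alpha)$ for all $(t,s)\in\mathring\Delta$, and $\Gamma(t,s)<\infty$ for $t>s$. A kernel $\Gamma:\Delta\to\mathbb{R}_+$ preserves nonnegativity if for every $T>0$, every $K\in\mathbb{N}^*$, $x_1,\dots,x_K\in\mathbb{R}$ and $0\le t_1<\dots<t_K<T$ with $\sum_{k'=1}^kx_{k'}\Gamma(t_k,t_{k'})\ge0$ for all $k\in\{1,\dots,K\}$, one has $\sum_{k:t_k\le t}x_k\Gamma(t,t_k)\ge0$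 for all $t\in[0,T]$. *)

theory Defs
  imports "HOL-Analysis.Analysis"
begin

text \<open>Kernels are functions \<open>\<Gamma> t s\<close>, intended on \<open>\<Delta> = {(t,s). 0 \<le> s \<and> s \<le> t}\<close>.\<close>

definition cm_data :: "real measure \<Rightarrow> (real \<Rightarrow> real measure) \<Rightarrow> bool" where
  "cm_data mu rho \<longleftrightarrow>
     sets mu = sets borel \<and>
     (\<forall>K. compact K \<longrightarrow> emeasure mu K < \<infinity>) \<and>
     (\<forall>a. sets (rho a) = sets (restrict_space borel {0::real..})) \<and>
     (\<forall>a K. compact K \<and> K \<subseteq> {0..} \<longrightarrow> emeasure (rho a) K < \<infinity>) \<and>
     (\<forall>a b A. a \<le> b \<and> A \<in> sets (rho a) \<longrightarrow> emeasure (rho a) A \<le> emeasure (rho b) A)"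

definition cm_double_kernel_with ::
    "(real \<Rightarrow> real \<Rightarrow> real) \<Rightarrow> real measure \<Rightarrow> (real \<Rightarrow> real measure) \<Rightarrow> bool" where
  "cm_double_kernel_with \<Gamma> mu rho \<longleftrightarrow>
     cm_data mu rho \<and>
     ((\<forall>t s. 0 \<le> s \<and> s < t \<longrightarrow>
         (\<integral>\<^sup>+ a. ennreal (exp (- measure (rho a) {s<..t})) \<partial>mu) < \<infinity> \<and>
         \<Gamma> t s = enn2real (\<integral>\<^sup>+ a. ennreal (exp (- measure (rho a) {s<..t})) \<partial>mu))
      \<or>
      (\<forall>t s. 0 \<le> s \<and> s < t \<longrightarrow>
         (\<integral>\<^sup>+ a. ennreal (exp (- measure (rho a) {s..<t})) \<partial>mu) < \<infinity> \<and>
         \<Gamma> t s = enn2real (\<integral>\<^sup>+ a. ennreal (exp (- measure (rho a) {s..<t})) \<partial>mu)))"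

definition preserves_nonnegativity :: "(real \<Rightarrow> real \<Rightarrow> real) \<Rightarrow> bool" where
  "preserves_nonnegativity \<Gamma> \<longleftrightarrow>
     (\<forall>T::real. T > 0 \<longrightarrow> (\<forall>K::nat. K \<ge> 1 \<longrightarrow>
       (\<forall>(x::nat \<Rightarrow> real) (tt::nat \<Rightarrow> real).
          (0 \<le> tt 1 \<and> (\<forall>k. 1 \<le> k \<and> k < K \<longrightarrow> tt k < tt (Suc k)) \<and> tt K < T \<and>
           (\<forall>k\<in>{1..K}. (\<Sum>k'=1..k. x k' * \<Gamma> (tt k) (tt k')) \<ge> 0))
          \<longrightarrow> (\<forall>t\<in>{0..T}. (\<Sum>k\<in>{k\<in>{1..K}. tt k \<le> t}. x k * \<Gamma> t (tt k)) \<ge> 0))))"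

end

theory Submission
  imports Defs
begin

definition Qp :: "(real \<Rightarrow> real) \<Rightarrow> bool" where
  "Qp h \<longleftrightarrow> (\<forall>\<alpha> \<beta>. \<alpha> < \<beta> \<longrightarrow> 0 < h \<beta> \<longrightarrow> h \<beta> \<le> h \<alpha>)"

definition good :: "real measure \<Rightarrow> (real \<Rightarrow> real) \<Rightarrow> bool" where
  "good M f \<longleftrightarrow> f \<in> borel_measurable M \<and> (\<exists>B. \<forall>\<alpha>. \<bar>f \<alpha>\<bar> \<le> B)"

definition wt :: "real measure \<Rightarrow> (real \<Rightarrow> real) \<Rightarrow> bool" where
  "wt M W \<longleftrightarrow> W \<in> borel_measurable M \<and> (\<forall>\<alpha>. 0 \<le> W \<alpha> \<and> W \<alpha> \<le> 1) \<and>
     (\<forall>\<alpha> \<beta>. \<alpha> \<le> \<beta> \<longrightarrow> W \<beta> \<le> W \<alpha>)"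

lemma good_integrable: "finite_measure M \<Longrightarrow> good M f \<Longrightarrow> integrable M f"
proof -
  assume fm: "finite_measure M" and g: "good M f"
  obtain B where B: "\<forall>\<alpha>. \<bar>f \<alpha>\<bar> \<le> B" and m: "f \<in> borel_measurable M"
    using g unfolding good_def by auto
  show "integrable M f"
    by (rule finite_measure.integrable_const_bound[OF fm, where B=B]) (use B m in auto)
qed

lemma good_const: "good M (\<lambda>_. a)"
  unfolding good_def by auto

lemma good_lin:
  assumes "good M f" "wt M D"
  shows "good M (\<lambda>\<alpha>. D \<alpha> * f \<alpha> + c)"
proof -
  obtain B where B: "\<forall>\<alpha>. \<bar>f \<alpha>\<bar> \<le> B" using assms(1) unfolding good_def by auto
  have "\<bar>D \<alpha> * f \<alpha> + c\<bar> \<le> B + \<bar>c\<bar>" for \<alpha>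
  proof -
    have "\<bar>D \<alpha> * f \<alpha>\<bar> \<le> 1 * B"
      unfolding abs_mult using assms(2) B unfolding wt_def
      by (intro mult_mono) auto
    then show ?thesis by linarith
  qed
  moreover have "(\<lambda>\<alpha>. D \<alpha> * f \<alpha> + c) \<in> borel_measurable M"
    using assms unfolding good_def wt_def by auto
  ultimately show ?thesis unfolding good_def by blast
qed

lemma good_mult:
  assumes "good M f" "wt M D"
  shows "good M (\<lambda>\<alpha>. D \<alpha> * f \<alpha>)"
  using good_lin[OF assms, of 0] by simp

lemma good_diff:
  assumes "good M f" "good M g"
  shows "good M (\<lambda>\<alpha>. f \<alpha> - g \<alpha>)"
proof -
  obtain B where B: "\<forall>\<alpha>. \<bar>f \<alpha>\<bar> \<le> B" using assms(1) unfolding good_def by auto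
  obtain C where C: "\<forall>\<alpha>. \<bar>g \<alpha>\<bar> \<le> C" using assms(2) unfolding good_def by auto
  have "\<bar>f \<alpha> - g \<alpha>\<bar> \<le> B + C" for \<alpha>
    using B[rule_format, of \<alpha>] C[rule_format, of \<alpha>] abs_triangle_ineq4[of "f \<alpha>" "g \<alpha>"] by linarith
  then show ?thesis using assms unfolding good_def by auto
qed

lemma Qp_lin:
  assumes "Qp h" "wt M D" "c \<le> 0"
  shows "Qp (\<lambda>\<alpha>. D \<alpha> * h \<alpha> + c)"
  unfolding Qp_def
proof (intro allI impI)
  fix \<alpha> \<beta> :: real
  assume lt: "\<alpha> < \<beta>" and p: "0 < D \<beta> * h \<beta> + c"
  have D: "0 \<le> D \<beta>" "D \<beta> \<le> D \<alpha>" using assms(2) lt unfolding wt_def by auto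
  have "0 < D \<beta> * h \<beta>" using p assms(3) by linarith
  then have hb: "0 < h \<beta>" using D(1) by (simp add: zero_less_mult_iff)
  then have "h \<beta> \<le> h \<alpha>" using assms(1) lt unfolding Qp_def by auto
  then have "D \<beta> * h \<beta> \<le> D \<alpha> * h \<alpha>" using D hb by (intro mult_mono) auto
  then show "D \<beta> * h \<beta> + c \<le> D \<alpha> * h \<alpha> + c" by simp
qed

lemma cheb:
  assumes fm: "finite_measure M" and Q: "Qp h" and g: "good M h" and W: "wt M W"
    and I: "0 \<le> integral\<^sup>L M h"
  shows "0 \<le> integral\<^sup>L M (\<lambda>\<alpha>. W \<alpha> * h \<alpha>)"
proof -
  define c where "c = Inf (insert 1 (W ` {\<beta>. 0 < h \<beta>}))"
  have Wb: "0 \<le> W \<alpha>" "W \<alpha> \<le> 1" for \<alpha> using W unfolding wt_def by auto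
  have bdd: "bdd_below (insert 1 (W ` {\<beta>. 0 < h \<beta>}))"
    by (rule bdd_belowI[of _ 0]) (use Wb in auto)
  have c0: "0 \<le> c" unfolding c_def by (rule cInf_greatest) (use Wb in auto)
  have pw: "c * h \<alpha> \<le> W \<alpha> * h \<alpha>" for \<alpha>
  proof (cases "0 < h \<alpha>")
    case True
    then have "c \<le> W \<alpha>" unfolding c_def by (intro cInf_lower bdd) auto
    then show ?thesis using True by (intro mult_right_mono) auto
  next
    case False
    have "W \<alpha> \<le> c" unfolding c_def
    proof (rule cInf_greatest)
      fix y assume "y \<in> insert 1 (W ` {\<beta>. 0 < h \<beta>})"
      then consider "y = 1" | \<beta> where "y = W \<beta>" "0 < h \<beta>" by auto
      then show "W \<alpha> \<le> y"
      proof cases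
        case 1 then show ?thesis using Wb by simp
      next
        case 2
        have "\<beta> < \<alpha>"
        proof (rule ccontr)
          assume "\<not> \<beta> < \<alpha>"
          then have "\<alpha> < \<beta> \<or> \<alpha> = \<beta>" by auto
          then show False
          proof
            assume "\<alpha> < \<beta>"
            then have "h \<beta> \<le> h \<alpha>" using Q 2 unfolding Qp_def by blast
            then show False using 2 False by linarith
          next
            assume "\<alpha> = \<beta>" then show False using 2 False by simp
          qed
        qed
        then show ?thesis using W 2 unfolding wt_def by auto
      qed
    qed auto
    then show ?thesis using False by (intro mult_right_mono_neg) auto
  qed
  have ih: "integrable M h" using good_integrable[OF fm g] .
  have iwh: "integrable M (\<lambda>\<alpha>. W \<alpha> * h \<alpha>)"
    using good_integrable[OF fm good_mult[OF g W]] .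
  have "integral\<^sup>L M (\<lambda>\<alpha>. c * h \<alpha>) \<le> integral\<^sup>L M (\<lambda>\<alpha>. W \<alpha> * h \<alpha>)"
    by (intro integral_mono ih iwh integrable_mult_right pw)
  moreover have "integral\<^sup>L M (\<lambda>\<alpha>. c * h \<alpha>) = c * integral\<^sup>L M h" by simp
  moreover have "0 \<le> c * integral\<^sup>L M h" using c0 I by simp
  ultimately show ?thesis by linarith
qed

fun resolv :: "real measure \<Rightarrow> (nat \<Rightarrow> real \<Rightarrow> real) \<Rightarrow> real \<Rightarrow> nat \<Rightarrow> real \<Rightarrow> real" where
  "resolv M D a 0 = (\<lambda>_. a)"
| "resolv M D a (Suc k) = (\<lambda>\<alpha>. D k \<alpha> * resolv M D a k \<alpha> +
      (- (integral\<^sup>L M (\<lambda>\<beta>. D k \<beta> * resolv M D a k \<beta>) / measure M (space M))))"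

lemma resolv_props:
  assumes fm: "finite_measure M" and pos: "0 < measure M (space M)" and a: "0 \<le> a"
    and D: "\<forall>k<N. wt M (D k)"
  shows "k \<le> N \<Longrightarrow> good M (resolv M D a k) \<and> Qp (resolv M D a k) \<and>
     0 \<le> integral\<^sup>L M (resolv M D a k) \<and> (0 < k \<longrightarrow> integral\<^sup>L M (resolv M D a k) = 0)"
proof (induction k)
  case 0
  then show ?case using a pos by (simp add: good_const Qp_def)
next
  case (Suc k)
  let ?H = "resolv M D a k"
  have IH: "good M ?H" "Qp ?H" "0 \<le> integral\<^sup>L M ?H" using Suc by auto
  have Dk: "wt M (D k)" using D Suc.prems by auto
  define c where "c = - (integral\<^sup>L M (\<lambda>\<beta>. D k \<beta> * ?H \<beta>) / measure M (space M))"
  have I0: "0 \<le> integral\<^sup>L M (\<lambda>\<beta>. D k \<beta> * ?H \<beta>)" using cheb[OF fm IH(2) IH(1) Dk IH(3)] .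
  have c0: "c \<le> 0" unfolding c_def using I0 pos by simp
  have eq: "resolv M D a (Suc k) = (\<lambda>\<alpha>. D k \<alpha> * ?H \<alpha> + c)" unfolding c_def by simp
  have g: "good M (resolv M D a (Suc k))" unfolding eq using good_lin[OF IH(1) Dk] .
  have q: "Qp (resolv M D a (Suc k))" unfolding eq using Qp_lin[OF IH(2) Dk c0] .
  have int1: "integrable M (\<lambda>\<beta>. D k \<beta> * ?H \<beta>)"
    using good_integrable[OF fm good_mult[OF IH(1) Dk]] .
  have "integral\<^sup>L M (resolv M D a (Suc k)) = integral\<^sup>L M (\<lambda>\<beta>. D k \<beta> * ?H \<beta>) + measure M (space M) * c"
    unfolding eq by (subst Bochner_Integration.integral_add[OF int1 good_integrable[OF fm good_const]]) auto
  also have "\<dots> = 0" unfolding c_def using pos by simp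
  finally show ?case using g q by simp
qed

lemma core:
  assumes fm: "finite_measure M" and pos: "0 < measure M (space M)" and W: "wt M W"
  shows "\<forall>(D::nat\<Rightarrow>real\<Rightarrow>real) (h::nat\<Rightarrow>real\<Rightarrow>real) (a::real). (\<forall>k<n. wt M (D k)) \<longrightarrow> h 0 = (\<lambda>_. a) \<longrightarrow>
     (\<forall>k<n. \<exists>c. h (Suc k) = (\<lambda>\<alpha>. D k \<alpha> * h k \<alpha> + c)) \<longrightarrow>
     (\<forall>k\<le>n. 0 \<le> integral\<^sup>L M (h k)) \<longrightarrow> 0 \<le> integral\<^sup>L M (\<lambda>\<alpha>. W \<alpha> * h n \<alpha>)"
proof (induction n)
  case 0
  show ?case
  proof (intro allI impI)
    fix D h :: "nat \<Rightarrow> real \<Rightarrow> real" and a :: real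
    assume h0: "h 0 = (\<lambda>_. a)" and I: "\<forall>k\<le>0. 0 \<le> integral\<^sup>L M (h k)"
    have "0 \<le> measure M (space M) * a" using I h0 by simp
    then have a: "0 \<le> a" using pos by (simp add: zero_le_mult_iff)
    have "0 \<le> integral\<^sup>L M W" using W unfolding wt_def by (intro Bochner_Integration.integral_nonneg) auto
    then show "0 \<le> integral\<^sup>L M (\<lambda>\<alpha>. W \<alpha> * h 0 \<alpha>)" using a h0 by simp
  qed
next
  case (Suc n)
  show ?case
  proof (intro allI impI)
    fix D h :: "nat \<Rightarrow> real \<Rightarrow> real" and a :: real
    assume D: "\<forall>k<Suc n. wt M (D k)" and h0: "h 0 = (\<lambda>_. a)"
      and rec: "\<forall>k<Suc n. \<exists>c. h (Suc k) = (\<lambda>\<alpha>. D k \<alpha> * h k \<alpha> + c)"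
      and I: "\<forall>k\<le>Suc n. 0 \<le> integral\<^sup>L M (h k)"
    have "0 \<le> measure M (space M) * a" using I h0 by (metis le0 lebesgue_integral_const real_scaleR_def)
    then have a: "0 \<le> a" using pos by (simp add: zero_le_mult_iff)
    let ?H = "resolv M D a"
    have HP: "good M (?H k) \<and> Qp (?H k) \<and> 0 \<le> integral\<^sup>L M (?H k) \<and> (0 < k \<longrightarrow> integral\<^sup>L M (?H k) = 0)"
      if "k \<le> Suc n" for k
      using resolv_props[OF fm pos a D that] .
    have hgood: "k \<le> Suc n \<Longrightarrow> good M (h k)" for k
    proof (induction k)
      case 0 then show ?case using h0 good_const by simp
    next
      case (Suc k)
      have "k < Suc n" using Suc.prems by simp
      then obtain c where "h (Suc k) = (\<lambda>\<alpha>. D k \<alpha> * h k \<alpha> + c)" using rec by blast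
      then show ?case using good_lin[of M "h k" "D k" c] Suc D by auto
    qed
    define g where "g k = (\<lambda>\<alpha>. h (Suc k) \<alpha> - ?H (Suc k) \<alpha>)" for k
    define D' where "D' k = D (Suc k)" for k
    obtain c1 where c1: "h (Suc 0) = (\<lambda>\<alpha>. D 0 \<alpha> * h 0 \<alpha> + c1)" using rec by auto
    have g0: "g 0 = (\<lambda>_. c1 + integral\<^sup>L M (\<lambda>\<beta>. D 0 \<beta> * a) / measure M (space M))"
      unfolding g_def using c1 h0 by (auto simp: algebra_simps)
    have grec: "\<forall>k<n. \<exists>c. g (Suc k) = (\<lambda>\<alpha>. D' k \<alpha> * g k \<alpha> + c)"
    proof (intro allI impI)
      fix k assume k: "k < n"
      obtain c where c: "h (Suc (Suc k)) = (\<lambda>\<alpha>. D (Suc k) \<alpha> * h (Suc k) \<alpha> + c)"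
        using rec k by auto
      show "\<exists>c. g (Suc k) = (\<lambda>\<alpha>. D' k \<alpha> * g k \<alpha> + c)"
        by (rule exI[of _ "c + integral\<^sup>L M (\<lambda>\<beta>. D (Suc k) \<beta> * ?H (Suc k) \<beta>) / measure M (space M)"])
          (auto simp: g_def D'_def c algebra_simps)
    qed
    have gI: "\<forall>k\<le>n. 0 \<le> integral\<^sup>L M (g k)"
    proof (intro allI impI)
      fix k assume k: "k \<le> n"
      have "integral\<^sup>L M (g k) = integral\<^sup>L M (h (Suc k)) - integral\<^sup>L M (?H (Suc k))"
      proof -
        have i1: "integrable M (h (Suc k))" using good_integrable[OF fm hgood[of "Suc k"]] k by simp
        have i2: "integrable M (?H (Suc k))" using good_integrable[OF fm] HP[of "Suc k"] k by simp
        show ?thesis unfolding g_def using Bochner_Integration.integral_diff[OF i1 i2] .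
      qed
      also have "\<dots> = integral\<^sup>L M (h (Suc k))" using HP[of "Suc k"] k by simp
      finally show "0 \<le> integral\<^sup>L M (g k)" using I k by simp
    qed
    have D'w: "\<forall>k<n. wt M (D' k)" using D unfolding D'_def by auto
    have IHg: "0 \<le> integral\<^sup>L M (\<lambda>\<alpha>. W \<alpha> * g n \<alpha>)"
      using Suc.IH D'w g0 grec gI by blast
    have IHH: "0 \<le> integral\<^sup>L M (\<lambda>\<alpha>. W \<alpha> * ?H (Suc n) \<alpha>)"
      using cheb[OF fm _ _ W] HP[of "Suc n"] by auto
    have "integral\<^sup>L M (\<lambda>\<alpha>. W \<alpha> * h (Suc n) \<alpha>) =
        integral\<^sup>L M (\<lambda>\<alpha>. W \<alpha> * g n \<alpha> + W \<alpha> * ?H (Suc n) \<alpha>)"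
      unfolding g_def by (simp add: algebra_simps)
    also have "\<dots> = integral\<^sup>L M (\<lambda>\<alpha>. W \<alpha> * g n \<alpha>) + integral\<^sup>L M (\<lambda>\<alpha>. W \<alpha> * ?H (Suc n) \<alpha>)"
    proof (rule Bochner_Integration.integral_add; rule good_integrable[OF fm]; rule good_mult[OF _ W])
      show "good M (g n)" unfolding g_def
        using good_diff[OF hgood[of "Suc n"], of "?H (Suc n)"] HP[of "Suc n"] by simp
      show "good M (?H (Suc n))" using HP[of "Suc n"] by blast
    qed
    finally show "0 \<le> integral\<^sup>L M (\<lambda>\<alpha>. W \<alpha> * h (Suc n) \<alpha>)" using IHg IHH by linarith
  qed
qed


lemma main_gen:
  fixes \<Gamma> :: "real \<Rightarrow> real \<Rightarrow> real" and mu :: "real measure" and rho :: "real \<Rightarrow> real measure"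
    and I :: "real \<Rightarrow> real \<Rightarrow> real set"
  assumes cm: "cm_data mu rho"
    and pos: "0 < emeasure mu UNIV" and fin: "emeasure mu UNIV < \<infinity>"
    and diag: "\<And>t. 0 \<le> t \<Longrightarrow> \<Gamma> t t = measure mu UNIV"
    and rep: "\<And>t s. 0 \<le> s \<Longrightarrow> s < t \<Longrightarrow>
       \<Gamma> t s = enn2real (\<integral>\<^sup>+ a. ennreal (exp (- measure (rho a) (I s t))) \<partial>mu)"
    and Ib: "\<And>s t. I s t \<in> sets borel"
    and Isub: "\<And>s t. I s t \<subseteq> {s..t}"
    and Iempty: "\<And>s. I s s = {}"
    and Isplit: "\<And>s u t. s \<le> u \<Longrightarrow> u \<le> t \<Longrightarrow> I s t = I s u \<union> I u t"
    and Idisj: "\<And>s u t. s \<le> u \<Longrightarrow> u \<le> t \<Longrightarrow> I s u \<inter> I u t = {}"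
  shows "preserves_nonnegativity \<Gamma>"
proof -
  have smu: "sets mu = sets borel" using cm unfolding cm_data_def by auto
  have spmu: "space mu = UNIV" using sets_eq_imp_space_eq[OF smu] by simp
  have fm: "finite_measure mu" using fin spmu by (intro finite_measureI) auto
  have mpos: "0 < measure mu (space mu)" using pos fin spmu
    by (simp add: measure_def enn2real_positive_iff)
  have srho: "\<And>a. sets (rho a) = sets (restrict_space borel {0::real..})"
    using cm unfolding cm_data_def by auto
  have rfin: "\<And>a K. compact K \<Longrightarrow> K \<subseteq> {0..} \<Longrightarrow> emeasure (rho a) K < \<infinity>"
    using cm unfolding cm_data_def by auto
  have rmono: "\<And>a b A. a \<le> b \<Longrightarrow> A \<in> sets (rho a) \<Longrightarrow> emeasure (rho a) A \<le> emeasure (rho b) A"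
    using cm unfolding cm_data_def by auto
  have inrho: "A \<in> sets (rho a)" if "A \<in> sets borel" "A \<subseteq> {0..}" for A a
    unfolding srho using that by (subst sets_restrict_space_iff) auto
  have Iin: "I s t \<in> sets (rho a)" if "0 \<le> s" for a s t
    using Isub[of s t] that by (intro inrho Ib) auto
  have Ifin: "emeasure (rho a) (I s t) < \<infinity>" if "0 \<le> s" for a s t
  proof -
    have "emeasure (rho a) (I s t) \<le> emeasure (rho a) {s..t}"
      using that Isub[of s t] by (intro emeasure_mono inrho) auto
    also have "\<dots> < \<infinity>" using that by (intro rfin) auto
    finally show ?thesis .
  qed
  define e where "e a s t = exp (- measure (rho a) (I s t))" for a s t
  have e_pos: "0 < e a s t" for a s t unfolding e_def by simp
  have e_le1: "e a s t \<le> 1" for a s t unfolding e_def by (simp add: measure_nonneg)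
  have e_diag: "e a s s = 1" for a s unfolding e_def by (simp add: Iempty)
  have e_mult: "e a s t = e a s u * e a u t" if "0 \<le> s" "s \<le> u" "u \<le> t" for a s u t
  proof -
    have "measure (rho a) (I s t) = measure (rho a) (I s u) + measure (rho a) (I u t)"
      unfolding Isplit[OF that(2,3)]
      by (rule measure_Union) (use that Ifin Iin Idisj in \<open>auto simp: less_top\<close>)
    then show ?thesis unfolding e_def by (simp add: exp_add[symmetric])
  qed
  have e_mono: "e b s t \<le> e a s t" if "0 \<le> s" "a \<le> b" for a b s t
  proof -
    have "emeasure (rho a) (I s t) \<le> emeasure (rho b) (I s t)"
      using rmono that Iin by auto
    then have "measure (rho a) (I s t) \<le> measure (rho b) (I s t)"
      unfolding measure_def using Ifin[OF that(1), of b t] by (intro enn2real_mono) (auto simp: less_top)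
    then show ?thesis unfolding e_def by simp
  qed
  have e_meas: "(\<lambda>a. e a s t) \<in> borel_measurable mu" if "0 \<le> s" for s t
  proof -
    have "mono (\<lambda>a. - e a s t)" unfolding mono_def using e_mono[OF that] by auto
    then have "(\<lambda>a. - e a s t) \<in> borel_measurable borel" by (rule borel_measurable_mono)
    then have "(\<lambda>a. - (- e a s t)) \<in> borel_measurable borel" by measurable
    then show ?thesis by (subst measurable_cong_sets[OF smu refl]) simp
  qed
  have e_wt: "wt mu (\<lambda>a. e a s t)" if "0 \<le> s" for s t
    unfolding wt_def using e_meas[OF that] e_pos e_le1 e_mono[OF that] by (auto simp: less_imp_le)
  have e_int: "integrable mu (\<lambda>a. e a s t)" if "0 \<le> s" for s t
  proof -
    have "good mu (\<lambda>a. e a s t)" unfolding good_def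
      using e_meas[OF that] e_pos e_le1 by (intro conjI exI[of _ 1]) (auto simp: less_imp_le)
    then show ?thesis using good_integrable[OF fm] by blast
  qed
  have \<Gamma>e: "\<Gamma> t s = integral\<^sup>L mu (\<lambda>a. e a s t)" if "0 \<le> s" "s \<le> t" for s t
  proof (cases "s = t")
    case True
    then show ?thesis using diag that spmu by (simp add: e_diag)
  next
    case False
    then have st: "s < t" using that by simp
    have "(\<integral>\<^sup>+ a. ennreal (e a s t) \<partial>mu) = ennreal (integral\<^sup>L mu (\<lambda>a. e a s t))"
      by (rule nn_integral_eq_integral[OF e_int[OF that(1)]]) (auto simp: less_imp_le e_pos)
    moreover have "0 \<le> integral\<^sup>L mu (\<lambda>a. e a s t)"
      by (intro Bochner_Integration.integral_nonneg) (auto simp: less_imp_le e_pos)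
    ultimately show ?thesis using rep[OF that(1) st] unfolding e_def by simp
  qed
  show ?thesis
    unfolding preserves_nonnegativity_def
  proof (intro allI impI ballI)
    fix T :: real and K :: nat and x tt :: "nat \<Rightarrow> real" and t :: real
    assume "0 < T" "1 \<le> K"
      and H: "0 \<le> tt 1 \<and> (\<forall>k. 1 \<le> k \<and> k < K \<longrightarrow> tt k < tt (Suc k)) \<and> tt K < T \<and>
           (\<forall>k\<in>{1..K}. 0 \<le> (\<Sum>k'=1..k. x k' * \<Gamma> (tt k) (tt k')))"
      and tT: "t \<in> {0..T}"
    have tt1: "0 \<le> tt 1" using H by auto
    have incr: "\<And>k. 1 \<le> k \<Longrightarrow> k < K \<Longrightarrow> tt k < tt (Suc k)" using H by auto
    have cond: "\<And>k. 1 \<le> k \<Longrightarrow> k \<le> K \<Longrightarrow> 0 \<le> (\<Sum>k'=1..k. x k' * \<Gamma> (tt k) (tt k'))"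
      using H by auto
    have ttmono: "1 \<le> j \<Longrightarrow> j \<le> k \<Longrightarrow> k \<le> K \<Longrightarrow> tt j \<le> tt k" for j k
    proof (induction k)
      case 0 then show ?case by simp
    next
      case (Suc k)
      show ?case
      proof (cases "j = Suc k")
        case True then show ?thesis by simp
      next
        case False
        then have "j \<le> k" using Suc.prems by simp
        then have "tt j \<le> tt k" using Suc by simp
        moreover have "tt k < tt (Suc k)" using incr[of k] Suc.prems \<open>j \<le> k\<close> by simp
        ultimately show ?thesis by simp
      qed
    qed
    have ttnn: "1 \<le> k \<Longrightarrow> k \<le> K \<Longrightarrow> 0 \<le> tt k" for k
      using ttmono[of 1 k] tt1 by simp
    have sumint: "(\<Sum>j=1..k. x j * \<Gamma> u (tt j)) = integral\<^sup>L mu (\<lambda>a. \<Sum>j=1..k. x j * e a (tt j) u)"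
      if "k \<le> K" "tt k \<le> u" for k u
    proof -
      have "(\<Sum>j=1..k. x j * \<Gamma> u (tt j)) = (\<Sum>j=1..k. integral\<^sup>L mu (\<lambda>a. x j * e a (tt j) u))"
      proof (intro sum.cong refl)
        fix j assume j: "j \<in> {1..k}"
        have "0 \<le> tt j" "tt j \<le> u" using j that ttnn ttmono[of j k] by auto
        then show "x j * \<Gamma> u (tt j) = integral\<^sup>L mu (\<lambda>a. x j * e a (tt j) u)"
          using \<Gamma>e by simp
      qed
      also have "\<dots> = integral\<^sup>L mu (\<lambda>a. \<Sum>j=1..k. x j * e a (tt j) u)"
        by (rule Bochner_Integration.integral_sum[symmetric]) (use that in \<open>auto intro!: integrable_mult_right e_int ttnn\<close>)
      finally show ?thesis .
    qed
    define S where "S = {k\<in>{1..K}. tt k \<le> t}"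
    show "0 \<le> (\<Sum>k\<in>{k\<in>{1..K}. tt k \<le> t}. x k * \<Gamma> t (tt k))"
    proof (cases "S = {}")
      case True
      then have "{k\<in>{1..K}. tt k \<le> t} = {}" unfolding S_def .
      then show ?thesis by (simp only: sum.empty)
    next
      case False
      define k0 where "k0 = Max S"
      have finS: "finite S" unfolding S_def by simp
      have k0S: "k0 \<in> S" unfolding k0_def using Max_in[OF finS False] .
      then have k0: "1 \<le> k0" "k0 \<le> K" "tt k0 \<le> t" unfolding S_def by auto
      have Seq: "S = {1..k0}"
      proof
        show "S \<subseteq> {1..k0}" unfolding k0_def using finS by (auto simp: S_def)
        show "{1..k0} \<subseteq> S"
        proof
          fix k assume k: "k \<in> {1..k0}"
          then have "tt k \<le> tt k0" using k0 ttmono[of k k0] by auto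
          then show "k \<in> S" unfolding S_def using k k0 by auto
        qed
      qed
      have "(\<Sum>k\<in>{k\<in>{1..K}. tt k \<le> t}. x k * \<Gamma> t (tt k)) = (\<Sum>j=1..k0. x j * \<Gamma> t (tt j))"
        using Seq unfolding S_def by simp
      also have "\<dots> = integral\<^sup>L mu (\<lambda>a. \<Sum>j=1..k0. x j * e a (tt j) t)"
        using sumint k0 by simp
      also have "\<dots> = integral\<^sup>L mu (\<lambda>a. e a (tt k0) t * (\<Sum>j=1..k0. x j * e a (tt j) (tt k0)))"
      proof (intro Bochner_Integration.integral_cong refl)
        fix a
        have "(\<Sum>j=1..k0. x j * e a (tt j) t) = (\<Sum>j=1..k0. e a (tt k0) t * (x j * e a (tt j) (tt k0)))"
        proof (intro sum.cong refl)
          fix j assume j: "j \<in> {1..k0}"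
          have "e a (tt j) t = e a (tt j) (tt k0) * e a (tt k0) t"
            using j k0 ttnn ttmono[of j k0] by (intro e_mult) auto
          then show "x j * e a (tt j) t = e a (tt k0) t * (x j * e a (tt j) (tt k0))" by simp
        qed
        then show "(\<Sum>j=1..k0. x j * e a (tt j) t) = e a (tt k0) t * (\<Sum>j=1..k0. x j * e a (tt j) (tt k0))"
          by (simp add: sum_distrib_left)
      qed
      finally have eqS: "(\<Sum>k\<in>{k\<in>{1..K}. tt k \<le> t}. x k * \<Gamma> t (tt k)) =
          integral\<^sup>L mu (\<lambda>a. e a (tt k0) t * (\<Sum>j=1..k0. x j * e a (tt j) (tt k0)))" .
      define W where "W = (\<lambda>a. e a (tt k0) t)"
      define D where "D i = (\<lambda>a. e a (tt (Suc i)) (tt (Suc (Suc i))))" for i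
      define h where "h i = (\<lambda>a. \<Sum>j=1..Suc i. x j * e a (tt j) (tt (Suc i)))" for i
      define n where "n = k0 - 1"
      have k0n: "k0 = Suc n" unfolding n_def using k0 by simp
      have Ww: "wt mu W" unfolding W_def using e_wt ttnn k0 by simp
      have Dw: "\<forall>i<n. wt mu (D i)" unfolding D_def using e_wt ttnn k0n k0 by simp
      have h0: "h 0 = (\<lambda>_. x 1)" unfolding h_def by (simp add: e_diag)
      have hrec: "\<forall>i<n. \<exists>c. h (Suc i) = (\<lambda>a. D i a * h i a + c)"
      proof (intro allI impI)
        fix i assume i: "i < n"
        have "h (Suc i) = (\<lambda>a. D i a * h i a + x (Suc (Suc i)))"
        proof
          fix a
          have "h (Suc i) a = (\<Sum>j=1..Suc i. x j * e a (tt j) (tt (Suc (Suc i)))) + x (Suc (Suc i))"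
            unfolding h_def by (simp add: e_diag)
          also have "(\<Sum>j=1..Suc i. x j * e a (tt j) (tt (Suc (Suc i)))) =
              (\<Sum>j=1..Suc i. D i a * (x j * e a (tt j) (tt (Suc i))))"
          proof (intro sum.cong refl)
            fix j assume j: "j \<in> {1..Suc i}"
            have "e a (tt j) (tt (Suc (Suc i))) = e a (tt j) (tt (Suc i)) * e a (tt (Suc i)) (tt (Suc (Suc i)))"
              using j i k0n k0 ttnn[of j] ttmono[of j "Suc i"] ttmono[of "Suc i" "Suc (Suc i)"]
              by (intro e_mult) auto
            then show "x j * e a (tt j) (tt (Suc (Suc i))) = D i a * (x j * e a (tt j) (tt (Suc i)))"
              unfolding D_def by simp
          qed
          also have "\<dots> = D i a * h i a" unfolding h_def by (simp only: sum_distrib_left)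
          finally show "h (Suc i) a = D i a * h i a + x (Suc (Suc i))" .
        qed
        then show "\<exists>c. h (Suc i) = (\<lambda>a. D i a * h i a + c)" by blast
      qed
      have hI: "\<forall>i\<le>n. 0 \<le> integral\<^sup>L mu (h i)"
      proof (intro allI impI)
        fix i assume i: "i \<le> n"
        have "integral\<^sup>L mu (h i) = (\<Sum>j=1..Suc i. x j * \<Gamma> (tt (Suc i)) (tt j))"
          unfolding h_def using sumint[of "Suc i" "tt (Suc i)"] i k0n k0 by simp
        also have "0 \<le> \<dots>" using cond[of "Suc i"] i k0n k0 by simp
        finally show "0 \<le> integral\<^sup>L mu (h i)" .
      qed
      have "0 \<le> integral\<^sup>L mu (\<lambda>a. W a * h n a)"
        using core[OF fm mpos Ww, of n] Dw h0 hrec hI by blast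
      then show ?thesis unfolding eqS W_def h_def k0n by simp
    qed
  qed
qed

theorem mainTheorem4:
  fixes \<Gamma> :: "real \<Rightarrow> real \<Rightarrow> real" and mu :: "real measure" and rho :: "real \<Rightarrow> real measure"
  assumes "cm_double_kernel_with \<Gamma> mu rho"
    and "0 < emeasure mu UNIV" and "emeasure mu UNIV < \<infinity>"
    and "\<And>t. 0 \<le> t \<Longrightarrow> \<Gamma> t t = measure mu UNIV"
  shows "preserves_nonnegativity \<Gamma>"
proof -
  have cm: "cm_data mu rho" using assms(1) unfolding cm_double_kernel_with_def by blast
  from assms(1) consider
      (A) "\<forall>t s. 0 \<le> s \<and> s < t \<longrightarrow>
         (\<integral>\<^sup>+ a. ennreal (exp (- measure (rho a) {s<..t})) \<partial>mu) < \<infinity> \<and>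
         \<Gamma> t s = enn2real (\<integral>\<^sup>+ a. ennreal (exp (- measure (rho a) {s<..t})) \<partial>mu)"
    | (B) "\<forall>t s. 0 \<le> s \<and> s < t \<longrightarrow>
         (\<integral>\<^sup>+ a. ennreal (exp (- measure (rho a) {s..<t})) \<partial>mu) < \<infinity> \<and>
         \<Gamma> t s = enn2real (\<integral>\<^sup>+ a. ennreal (exp (- measure (rho a) {s..<t})) \<partial>mu)"
    unfolding cm_double_kernel_with_def by blast
  then show ?thesis
  proof cases
    case A
    show ?thesis
    proof (rule main_gen[OF cm assms(2,3,4), where I = "\<lambda>s t. {s<..t}"])
      show "\<And>t s. 0 \<le> s \<Longrightarrow> s < t \<Longrightarrow>
         \<Gamma> t s = enn2real (\<integral>\<^sup>+ a. ennreal (exp (- measure (rho a) {s<..t})) \<partial>mu)"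
        using A by blast
    qed auto
  next
    case B
    show ?thesis
    proof (rule main_gen[OF cm assms(2,3,4), where I = "\<lambda>s t. {s..<t}"])
      show "\<And>t s. 0 \<le> s \<Longrightarrow> s < t \<Longrightarrow>
         \<Gamma> t s = enn2real (\<integral>\<^sup>+ a. ennreal (exp (- measure (rho a) {s..<t})) \<partial>mu)"
        using B by blast
    qed auto
  qed
qed

end
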